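(* Let $b,\beta,\gamma$ be real with $\beta>0$ and $0<b+1<\gamma<b+1+\beta$, and for $0\le v<1$ let $$K(v)=\frac{F(b,\beta;\gamma;v)}{F(b+1,\beta;\gamma;v)}.$$ Then: (i) $K(0)=1$; (ii) $\lim_{v\to1}K(v)=0$; (iii) if $b\ge0$, or if $-1<b<0$ and $\gamma\ge\beta$, then $K$ is monotone decreasing; (iv) if $-1<b<0$ and $\gamma<\beta$, then the minimum of $K$ is a negative value and $K(v)$ approaches $0$ from below as $v\to1$; moreover $\inf_{0\le v<1}K(v)\ge b/(b+1)$.
   Context: $F(\alpha,\beta;\gamma;z)=1+\sum_{i\ge1}\frac{(\alpha)_i(\beta)_i}{(\gamma)_i}\frac{z^i}{i!}$ is the Gauss hypergeometric function, with $(\alpha)_i=\alpha(\alpha+1)\cdots(\alpha+i-1)$, for $|z|<1$. *)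

theory Defs
  imports "HOL-Analysis.Analysis"
begin

definition hyp2F1 :: "real \<Rightarrow> real \<Rightarrow> real \<Rightarrow> real \<Rightarrow> real" where
  "hyp2F1 a b c z =
     (\<Sum>n. pochhammer a n * pochhammer b n / pochhammer c n * z ^ n / fact n)"

end

theory Submission
  imports Defs
begin


definition hc :: "real \<Rightarrow> real \<Rightarrow> real \<Rightarrow> nat \<Rightarrow> real" where
  "hc a b c n = pochhammer a n * pochhammer b n / pochhammer c n / fact n"

lemma hyp2F1_hc: "hyp2F1 a b c z = (\<Sum>n. hc a b c n * z ^ n)"
  unfolding hyp2F1_def hc_def by (simp add: field_simps)

lemma hc_0[simp]: "hc a b c 0 = 1" by (simp add: hc_def)

lemma hc_Suc:
  assumes "c > 0"
  shows "hc a b c (Suc n) = hc a b c n * ((a + n) * (b + n) / ((c + n) * (n + 1)))"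
proof -
  have "pochhammer c n > 0" using assms by (simp add: pochhammer_pos)
  moreover have "c + n > 0" using assms by simp
  ultimately show ?thesis unfolding hc_def
    by (simp add: pochhammer_rec' field_simps)
qed

lemma hc_pos: "a > 0 \<Longrightarrow> b > 0 \<Longrightarrow> c > 0 \<Longrightarrow> hc a b c n > 0"
  unfolding hc_def by (simp add: pochhammer_pos)

lemma ratio_lim: fixes p q s t :: real shows "(\<lambda>n. (p + real n) * (q + n) / ((s + n) * (t + n))) \<longlonglongrightarrow> 1"
proof -
  have "(\<lambda>n. (p / real n + 1) * (q / n + 1) / ((s / n + 1) * (t / n + 1))) \<longlonglongrightarrow> (0 + 1) * (0 + 1) / ((0 + 1) * (0 + 1))"
    by (intro tendsto_intros) auto
  moreover have "eventually (\<lambda>n. (p / real n + 1) * (q / n + 1) / ((s / n + 1) * (t / n + 1)) =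
     (p + real n) * (q + n) / ((s + n) * (t + n))) sequentially"
    using eventually_gt_at_top[of "0::nat"]
  proof eventually_elim
    case (elim n)
    then have n: "real n > 0" by simp
    have "(p / real n + 1) = (p + n) / n" "(q / real n + 1) = (q + n) / n"
         "(s / real n + 1) = (s + n) / n" "(t / real n + 1) = (t + n) / n"
      using n by (auto simp: field_simps)
    then show ?case using n by simp
  qed
  ultimately show ?thesis by (simp add: tendsto_cong)
qed

lemma hc_summable:
  assumes "a > 0" "b > 0" "c > 0" "\<bar>z\<bar> < 1"
  shows "summable (\<lambda>n. hc a b c n * z ^ n)"
proof -
  have "conv_radius (hc a b c) = 1"
  proof (rule conv_radius_ratio_limit_nonzero[of _ 1])
    have "(\<lambda>n. (c + n) * (1 + n) / ((a + n) * (b + n))) \<longlonglongrightarrow> 1"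
      by (rule ratio_lim)
    moreover have "norm (hc a b c n) / norm (hc a b c (Suc n)) = (c + n) * (1 + n) / ((a + n) * (b + n))" for n
    proof -
      have "hc a b c n > 0" using hc_pos assms by auto
      moreover have "a + n > 0" "b + n > 0" "c + n > 0" using assms by auto
      moreover define R where "R = (a + n) * (b + n) / ((c + n) * (n + 1))"
      ultimately have R: "R > 0" by simp
      have "norm (hc a b c n) / norm (hc a b c (Suc n)) = hc a b c n / (hc a b c n * R)"
      proof -
        have e: "hc a b c (Suc n) = hc a b c n * R" unfolding R_def by (rule hc_Suc[OF assms(3)])
        have "norm (hc a b c (Suc n)) = hc a b c n * R" unfolding e using R \<open>hc a b c n > 0\<close> by simp
        moreover have "norm (hc a b c n) = hc a b c n" using \<open>hc a b c n > 0\<close> by simp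
        ultimately show ?thesis by simp
      qed
      also have "\<dots> = 1 / R" using \<open>hc a b c n > 0\<close> by simp
      also have "\<dots> = (c + n) * (1 + n) / ((a + n) * (b + n))" by (simp add: R_def)
      finally show ?thesis .
    qed
    ultimately show "(\<lambda>n. norm (hc a b c n) / norm (hc a b c (Suc n))) \<longlonglongrightarrow> 1" by simp
  qed auto
  then show ?thesis using assms by (intro summable_in_conv_radius) simp
qed

definition rr :: "real \<Rightarrow> nat \<Rightarrow> real" where
  "rr b n = (if n = 0 then 1 else b / (b + n))"

lemma hc_b:
  assumes "b > -1"
  shows "hc b be ga n = hc (b + 1) be ga n * rr b n"
proof (cases n)
  case 0 then show ?thesis by (simp add: rr_def)
next
  case (Suc m)
  have ne: "b + 1 + m \<noteq> 0" using assms by (smt (verit) of_nat_0_le_iff)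
  have "pochhammer b n = pochhammer (b + 1) n * (b / (b + n))"
    unfolding Suc pochhammer_rec[of b m] pochhammer_rec'[of "b+1" m] using ne
    by (simp add: field_simps)
  then show ?thesis unfolding hc_def rr_def using Suc by (simp add: field_simps)
qed

lemma bk_term:
  fixes r :: "nat \<Rightarrow> real"
  assumes anti: "\<And>m n. m \<le> n \<Longrightarrow> r n \<le> r m" and "0 \<le> u" "u \<le> v"
  shows "(r m - r n) * (v^m * u^n - u^m * v^n) \<le> 0"
proof -
  have key: "v^i * u^j - u^i * v^j \<le> 0" if "i \<le> j" for i j
  proof -
    obtain k where j: "j = i + k" using \<open>i \<le> j\<close> le_Suc_ex by blast
    have "u^k \<le> v^k" using assms by (intro power_mono) auto
    then have "(u^i * v^i) * u^k \<le> (u^i * v^i) * v^k" using assms by (intro mult_left_mono) auto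
    then show ?thesis unfolding j power_add by (simp add: algebra_simps)
  qed
  show ?thesis
  proof (cases "m \<le> n")
    case True
    then show ?thesis using anti[OF True] key[OF True] by (intro mult_nonneg_nonpos) auto
  next
    case False
    then have "n \<le> m" by simp
    from key[OF this] have "u^m * v^n \<le> v^m * u^n" by (simp add: mult.commute)
    with anti[OF \<open>n \<le> m\<close>] show ?thesis by (intro mult_nonpos_nonneg) auto
  qed
qed

lemma bk_finite:
  fixes r c :: "nat \<Rightarrow> real"
  assumes anti: "\<And>m n. m \<le> n \<Longrightarrow> r n \<le> r m" and c: "\<And>n. 0 \<le> c n" and "0 \<le> u" "u \<le> v"
  shows "(\<Sum>m<N. c m * r m * v^m) * (\<Sum>n<N. c n * u^n) \<le> (\<Sum>m<N. c m * r m * u^m) * (\<Sum>n<N. c n * v^n)"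
proof -
  define g where "g m n = c m * c n * r m * (v^m * u^n - u^m * v^n)" for m n
  have eq: "(\<Sum>m<N. c m * r m * v^m) * (\<Sum>n<N. c n * u^n) - (\<Sum>m<N. c m * r m * u^m) * (\<Sum>n<N. c n * v^n)
     = (\<Sum>m<N. \<Sum>n<N. g m n)"
    unfolding g_def sum_product sum_subtractf[symmetric] by (intro sum.cong refl) (simp add: algebra_simps)
  have sw: "(\<Sum>m<N. \<Sum>n<N. g m n) = (\<Sum>m<N. \<Sum>n<N. g n m)" by (rule sum.swap)
  have "2 * (\<Sum>m<N. \<Sum>n<N. g m n) = (\<Sum>m<N. \<Sum>n<N. g m n + g n m)"
    using sw by (simp add: sum.distrib)
  also have "\<dots> \<le> 0"
  proof (intro sum_nonpos)
    fix m n
    have t: "(r m - r n) * (v^m * u^n - u^m * v^n) \<le> 0"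
      by (rule bk_term) (use anti assms(3,4) in auto)
    have "g m n + g n m = (c m * c n) * ((r m - r n) * (v^m * u^n - u^m * v^n))"
      unfolding g_def by (simp add: algebra_simps)
    also have "\<dots> \<le> 0" by (rule mult_nonneg_nonpos) (use t c in auto)
    finally show "g m n + g n m \<le> 0" .
  qed
  finally show ?thesis using eq by linarith
qed

lemma bk_infinite:
  fixes r c :: "nat \<Rightarrow> real"
  assumes anti: "\<And>m n. m \<le> n \<Longrightarrow> r n \<le> r m" and c: "\<And>n. 0 \<le> c n" and "0 \<le> u" "u \<le> v"
    and s1: "summable (\<lambda>n. c n * r n * v^n)" and s2: "summable (\<lambda>n. c n * u^n)"
    and s3: "summable (\<lambda>n. c n * r n * u^n)" and s4: "summable (\<lambda>n. c n * v^n)"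
  shows "(\<Sum>n. c n * r n * v^n) * (\<Sum>n. c n * u^n) \<le> (\<Sum>n. c n * r n * u^n) * (\<Sum>n. c n * v^n)"
proof (rule LIMSEQ_le)
  show "(\<lambda>N. (\<Sum>m<N. c m * r m * v^m) * (\<Sum>n<N. c n * u^n)) \<longlonglongrightarrow> (\<Sum>n. c n * r n * v^n) * (\<Sum>n. c n * u^n)"
    using s1 s2 by (intro tendsto_mult) (simp_all add: summable_LIMSEQ)
  show "(\<lambda>N. (\<Sum>m<N. c m * r m * u^m) * (\<Sum>n<N. c n * v^n)) \<longlonglongrightarrow> (\<Sum>n. c n * r n * u^n) * (\<Sum>n. c n * v^n)"
    using s3 s4 by (intro tendsto_mult) (simp_all add: summable_LIMSEQ)
  show "\<exists>N. \<forall>n\<ge>N. (\<Sum>m<n. c m * r m * v^m) * (\<Sum>n<n. c n * u^n) \<le> (\<Sum>m<n. c m * r m * u^m) * (\<Sum>n<n. c n * v^n)"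
  proof -
    have "(\<Sum>m<N. c m * r m * v^m) * (\<Sum>n<N. c n * u^n) \<le> (\<Sum>m<N. c m * r m * u^m) * (\<Sum>n<N. c n * v^n)" for N
      by (rule bk_finite[OF anti c assms(3,4)])
    then show ?thesis by blast
  qed
qed

lemma hc_diverge:
  assumes a: "a > 0" and be: "be > 0" and ga: "ga > 0" and lt: "ga < a + be"
  shows "\<not> summable (hc a be ga)"
proof
  assume summ: "summable (hc a be ga)"
  define c where "c = hc a be ga"
  define D where "D = a + be - ga"
  define E where "E = 2*a + be*(a+2) - 2*ga - 1"
  define F where "F = 2*a*be - ga"
  have D: "D > 0" using lt by (simp add: D_def)
  have "(\<lambda>n. D + E / real n + F * (inverse (real n))^2) \<longlonglongrightarrow> D + 0 + F * 0^2"
    by (intro tendsto_intros lim_inverse_n)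
  then have "eventually (\<lambda>n. D + E / real n + F * (inverse (real n))^2 > 0) sequentially"
    using D by (intro order_tendstoD) auto
  then have "eventually (\<lambda>n. (real n+2)*(a+real n)*(be+real n) - (ga+real n)*(real n+1)^2 > 0) sequentially"
    using eventually_gt_at_top[of "0::nat"]
  proof eventually_elim
    case (elim n)
    then have n: "real n > 0" by simp
    have "(real n+2)*(a+real n)*(be+real n) - (ga+real n)*(real n+1)^2 = (real n)^2 * (D + E / real n + F * (inverse (real n))^2)"
      using n unfolding D_def E_def F_def by (simp add: field_simps power2_eq_square)
    then show ?case using elim(1) n by simp
  qed
  then obtain N where N: "\<And>n. n \<ge> N \<Longrightarrow> (real n+2)*(a+real n)*(be+real n) - (ga+real n)*(real n+1)^2 > 0"
    by (auto simp: eventually_sequentially)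
  have cpos: "c n > 0" for n unfolding c_def using hc_pos a be ga by auto
  have stp: "(real (Suc n) + 1) * c (Suc n) \<ge> (real n + 1) * c n" if "n \<ge> N" for n
  proof -
    have pos: "ga + n > 0" "real n + 1 > 0" using ga by auto
    have ceq: "c (Suc n) = c n * ((a + n) * (be + n) / ((ga + n) * (n + 1)))"
      unfolding c_def by (rule hc_Suc[OF ga])
    have "(real (Suc n) + 1) * c (Suc n) - (real n + 1) * c n
       = c n * (((real n+2)*(a+real n)*(be+real n) - (ga+real n)*(real n+1)^2) / ((ga + n) * (n + 1)))"
    proof -
      have X: "(ga + real n) * (real n + 1) \<noteq> 0" using pos by simp
      show ?thesis unfolding ceq using X
        by (simp add: divide_simps) (simp add: algebra_simps power2_eq_square)
    qed
    also have "\<dots> \<ge> 0" using N[OF that] cpos[of n] pos by (intro mult_nonneg_nonneg divide_nonneg_pos) auto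
    finally show ?thesis by simp
  qed
  have low: "(real n + 1) * c n \<ge> (real N + 1) * c N" if "n \<ge> N" for n
    using that
  proof (induction n rule: dec_induct)
    case base then show ?case by simp
  next
    case (step m) then show ?case using stp[of m] by simp
  qed
  define \<delta> where "\<delta> = (real N + 1) * c N"
  have \<delta>: "\<delta> > 0" unfolding \<delta>_def using cpos[of N] by simp
  have "summable (\<lambda>n. c n / \<delta>)" using summ unfolding c_def by (rule summable_divide)
  then have "summable (\<lambda>n. inverse (real (Suc n)))"
  proof (rule summable_comparison_test')
    fix n assume "n \<ge> N"
    from low[OF this] have "\<delta> \<le> (real n + 1) * c n" unfolding \<delta>_def .
    then show "norm (inverse (real (Suc n))) \<le> c n / \<delta>"
      using \<delta> by (simp add: field_simps)
  qed
  then have "summable (\<lambda>n. inverse (real n))"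
    using summable_Suc_iff[where f="\<lambda>n. inverse (real n)"] by simp
  then show False using not_summable_harmonic by blast
qed

lemma powser_unbounded:
  fixes c :: "nat \<Rightarrow> real"
  assumes c: "\<And>n. 0 \<le> c n" and ns: "\<not> summable c"
    and sm: "\<And>v. 0 \<le> v \<Longrightarrow> v < 1 \<Longrightarrow> summable (\<lambda>n. c n * v^n)"
  shows "eventually (\<lambda>v. (\<Sum>n. c n * v^n) \<ge> M) (at_left 1)"
proof -
  obtain N where N: "sum c {..<N} > M + 1"
  proof (rule ccontr)
    assume "\<not> thesis"
    then have "\<And>N. sum c {..<N} \<le> M + 1" using that by (meson not_le)
    then have "summable c" using c by (intro summableI_nonneg_bounded) auto
    then show False using ns by simp
  qed
  have "((\<lambda>v. \<Sum>n<N. c n * v^n) \<longlongrightarrow> (\<Sum>n<N. c n * 1^n)) (at_left (1::real))"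
    by (intro tendsto_intros)
  then have "eventually (\<lambda>v. (\<Sum>n<N. c n * v^n) > M) (at_left (1::real))"
    using N by (intro order_tendstoD) auto
  moreover have "eventually (\<lambda>v. v \<in> {0<..<1}) (at_left (1::real))"
    by (rule eventually_at_left_real) simp
  ultimately show ?thesis
  proof eventually_elim
    case (elim v)
    then have "(\<Sum>n<N. c n * v^n) \<le> (\<Sum>n. c n * v^n)"
      using c sm[of v] by (intro sum_le_suminf) auto
    then show ?case using elim by simp
  qed
qed

lemma ratio_to_zero:
  fixes c r :: "nat \<Rightarrow> real"
  assumes c: "\<And>n. 0 \<le> c n" and B: "\<And>n. \<bar>r n\<bar> \<le> B"
    and r0: "\<And>e. e > 0 \<Longrightarrow> \<exists>N. \<forall>n\<ge>N. \<bar>r n\<bar> \<le> e"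
    and sm: "\<And>v. 0 \<le> v \<Longrightarrow> v < 1 \<Longrightarrow> summable (\<lambda>n. c n * v^n)"
    and big: "\<And>M. eventually (\<lambda>v. (\<Sum>n. c n * v^n) \<ge> M) (at_left 1)"
  shows "((\<lambda>v. (\<Sum>n. c n * r n * v^n) / (\<Sum>n. c n * v^n)) \<longlongrightarrow> 0) (at_left 1)"
proof (rule tendstoI)
  fix e :: real assume e: "e > 0"
  define \<epsilon> where "\<epsilon> = e / 2"
  have \<epsilon>: "\<epsilon> > 0" using e by (simp add: \<epsilon>_def)
  obtain N where N: "\<And>n. n \<ge> N \<Longrightarrow> \<bar>r n\<bar> \<le> \<epsilon>" using r0[OF \<epsilon>] by auto
  define M0 where "M0 = (\<Sum>n<N. c n * \<bar>r n\<bar>)"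
  have M0: "M0 \<ge> 0" unfolding M0_def using c by (intro sum_nonneg) auto
  have "eventually (\<lambda>v. (\<Sum>n. c n * v^n) \<ge> (M0 + 1) / \<epsilon>) (at_left 1)" by (rule big)
  moreover have "eventually (\<lambda>v. v \<in> {0<..<1}) (at_left (1::real))"
    by (rule eventually_at_left_real) simp
  ultimately show "eventually (\<lambda>v. dist ((\<Sum>n. c n * r n * v^n) / (\<Sum>n. c n * v^n)) 0 < e) (at_left 1)"
  proof eventually_elim
    case (elim v)
    define C where "C = (\<Sum>n. c n * v^n)"
    have v: "0 < v" "v < 1" using elim by auto
    have smv: "summable (\<lambda>n. c n * v^n)" using sm v by auto
    have CM: "C \<ge> (M0 + 1) / \<epsilon>" using elim unfolding C_def by simp
    have "(M0 + 1) / \<epsilon> > 0" using M0 \<epsilon> by (intro divide_pos_pos) auto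
    then have Cpos: "C > 0" using CM by linarith
    have sabs: "summable (\<lambda>n. \<bar>c n * r n * v^n\<bar>)"
    proof (rule summable_comparison_test')
      show "summable (\<lambda>n. B * (c n * v^n))" using smv by (rule summable_mult)
      fix n
      have "\<bar>c n * r n * v^n\<bar> = \<bar>r n\<bar> * (c n * v^n)" using c[of n] v by (simp add: abs_mult)
      also have "\<dots> \<le> B * (c n * v^n)" using B[of n] c[of n] v by (intro mult_right_mono) auto
      finally show "norm (\<bar>c n * r n * v^n\<bar>) \<le> B * (c n * v^n)" by simp
    qed
    have sif: "(\<lambda>n. if n \<in> {..<N} then c n * \<bar>r n\<bar> else 0) sums M0"
      unfolding M0_def by (rule sums_If_finite_set) simp
    have "\<bar>\<Sum>n. c n * r n * v^n\<bar> \<le> (\<Sum>n. \<bar>c n * r n * v^n\<bar>)" using sabs by (rule summable_rabs)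
    also have "\<dots> \<le> (\<Sum>n. \<epsilon> * (c n * v^n) + (if n \<in> {..<N} then c n * \<bar>r n\<bar> else 0))"
    proof (rule suminf_le)
      show "summable (\<lambda>n. \<epsilon> * (c n * v^n) + (if n \<in> {..<N} then c n * \<bar>r n\<bar> else 0))"
        using smv sif by (intro summable_add summable_mult) (auto simp: sums_iff)
      show "summable (\<lambda>n. \<bar>c n * r n * v^n\<bar>)" by (fact sabs)
      fix n
      have eq: "\<bar>c n * r n * v^n\<bar> = \<bar>r n\<bar> * (c n * v^n)" using c[of n] v by (simp add: abs_mult)
      show "\<bar>c n * r n * v^n\<bar> \<le> \<epsilon> * (c n * v^n) + (if n \<in> {..<N} then c n * \<bar>r n\<bar> else 0)"
      proof (cases "n < N")
        case True
        have "v^n \<le> 1" using v by (simp add: power_le_one)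
        then have "\<bar>r n\<bar> * (c n * v^n) \<le> \<bar>r n\<bar> * (c n * 1)" using c[of n]
          by (intro mult_left_mono) auto
        moreover have "\<epsilon> * (c n * v^n) \<ge> 0" using \<epsilon> c[of n] v by simp
        ultimately show ?thesis using True eq by (simp add: mult.commute)
      next
        case False
        then show ?thesis using eq N[of n] c[of n] v by (simp add: mult_right_mono)
      qed
    qed
    also have "\<dots> = \<epsilon> * C + M0"
      using smv sif unfolding C_def by (subst suminf_add[symmetric]) (auto simp: sums_iff suminf_mult)
    finally have A: "\<bar>\<Sum>n. c n * r n * v^n\<bar> \<le> \<epsilon> * C + M0" .
    have MC: "M0 / C < \<epsilon>"
    proof -
      have "M0 < (M0 + 1)" by simp
      also have "\<dots> \<le> \<epsilon> * C" using CM \<epsilon> by (simp add: pos_divide_le_eq mult.commute)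
      finally show ?thesis using Cpos by (simp add: pos_divide_less_eq)
    qed
    have "\<bar>(\<Sum>n. c n * r n * v^n) / C\<bar> = \<bar>\<Sum>n. c n * r n * v^n\<bar> / C"
      using Cpos by simp
    also have "\<dots> \<le> (\<epsilon> * C + M0) / C"
      by (rule divide_right_mono[OF A]) (use Cpos in simp)
    also have "\<dots> = \<epsilon> + M0 / C" using Cpos by (simp add: add_divide_distrib)
    also have "\<dots> < \<epsilon> + \<epsilon>" using MC by simp
    finally have "\<bar>(\<Sum>n. c n * r n * v^n) / C\<bar> < \<epsilon> + \<epsilon>" .
    then show ?case unfolding C_def[symmetric] dist_real_def \<epsilon>_def by simp
  qed
qed



lemma binom_sums:
  fixes v b :: real
  assumes "0 \<le> v" "v < 1"
  shows "(\<lambda>n. pochhammer b n / fact n * v^n) sums ((1 - v) powr (-b))"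
proof -
  have "(\<lambda>n. ((-b) gchoose n) * (-v)^n) sums ((1 + -v) powr (-b))"
    by (rule gen_binomial_real) (use assms in auto)
  moreover have "((-b) gchoose n) * (-v)^n = pochhammer b n / fact n * v^n" for n
  proof -
    have g: "(-b) gchoose n = (-1)^n * pochhammer b n / fact n" by (simp add: gbinomial_pochhammer)
    have p: "(-v)^n = (-1)^n * v^n" by (rule power_minus)
    have m: "(-1::real)^n * (-1)^n = 1" by (induction n) auto
    have "((-b) gchoose n) * (-v)^n = ((-1)^n * (-1)^n) * (pochhammer b n / fact n * v^n)"
      unfolding g p by (simp only: mult_ac times_divide_eq_left times_divide_eq_right)
    also have "\<dots> = pochhammer b n / fact n * v^n" by (simp only: m mult_1_left)
    finally show ?thesis .
  qed
  ultimately show ?thesis by simp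
qed

lemma poch_nonpos:
  fixes b :: real
  assumes "-1 < b" "b < 0" "n \<ge> 1"
  shows "pochhammer b n \<le> 0"
proof -
  obtain m where n: "n = Suc m" using assms(3) by (cases n) auto
  have "pochhammer (b+1) m > 0" using assms by (intro pochhammer_pos) auto
  then show ?thesis unfolding n pochhammer_rec using assms by (simp add: mult_nonpos_nonneg)
qed

definition qq :: "real \<Rightarrow> real \<Rightarrow> nat \<Rightarrow> real" where
  "qq be ga n = pochhammer be n / pochhammer ga n"

lemma hc_qq: "hc b be ga n = pochhammer b n / fact n * qq be ga n"
  unfolding hc_def qq_def by simp

lemma qq_Suc: assumes "ga > 0" shows "qq be ga (Suc n) = qq be ga n * ((be + n) / (ga + n))"
proof -
  have "pochhammer ga n > 0" "ga + n > 0" using assms by (auto intro: pochhammer_pos)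
  then show ?thesis unfolding qq_def pochhammer_rec' by (simp add: field_simps)
qed

lemma qq_pos: "be > 0 \<Longrightarrow> ga > 0 \<Longrightarrow> qq be ga n > 0"
  unfolding qq_def by (simp add: pochhammer_pos)

lemma qq_le1:
  assumes "0 < be" "be \<le> ga" shows "qq be ga n \<le> 1"
proof (induction n)
  case 0 then show ?case by (simp add: qq_def)
next
  case (Suc n)
  have "(be + n) / (ga + n) \<le> 1" "0 \<le> (be + n) / (ga + n)" using assms by auto
  moreover have "qq be ga n \<ge> 0" using qq_pos[of be ga n] assms by simp
  ultimately have "qq be ga n * ((be + n) / (ga + n)) \<le> 1 * 1"
    using Suc by (intro mult_mono) auto
  then show ?case using assms by (simp add: qq_Suc)
qed

lemma qq_ge:
  assumes "0 < ga" "ga \<le> be" "n \<ge> 1" shows "qq be ga n \<ge> be / ga"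
  using assms(3)
proof (induction n rule: dec_induct)
  case base then show ?case using assms by (simp add: qq_def)
next
  case (step n)
  have "(be + n) / (ga + n) \<ge> 1" using assms by auto
  moreover have "qq be ga n \<ge> 0" using qq_pos[of be ga n] assms by simp
  ultimately have "qq be ga n * 1 \<le> qq be ga n * ((be + n) / (ga + n))"
    by (intro mult_left_mono) auto
  then show ?case using assms step by (simp add: qq_Suc)
qed




theorem lemma3p4:
  fixes b \<beta> \<gamma> :: real and K :: "real \<Rightarrow> real"
  assumes "\<beta> > 0" and "0 < b + 1" and "b + 1 < \<gamma>" and "\<gamma> < b + 1 + \<beta>"
    and K_def: "\<And>v. K v = hyp2F1 b \<beta> \<gamma> v / hyp2F1 (b + 1) \<beta> \<gamma> v"
  shows "K 0 = 1
    \<and> (K \<longlongrightarrow> 0) (at_left 1)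
    \<and> ((b \<ge> 0 \<or> (-1 < b \<and> b < 0 \<and> \<gamma> \<ge> \<beta>)) \<longrightarrow>
           (\<forall>u\<in>{0..<1}. \<forall>v\<in>{0..<1}. u \<le> v \<longrightarrow> K v \<le> K u))
    \<and> ((-1 < b \<and> b < 0 \<and> \<gamma> < \<beta>) \<longrightarrow>
           (\<exists>v0\<in>{0..<1}. K v0 < 0 \<and> (\<forall>v\<in>{0..<1}. K v0 \<le> K v))
           \<and> (\<forall>\<^sub>F v in at_left 1. K v < 0) \<and> (K \<longlongrightarrow> 0) (at_left 1)
           \<and> (INF v\<in>{0..<1}. K v) \<ge> b / (b + 1))"
proof -
  note be = assms(1)
  have b1: "b > -1" using assms by simp
  have ga: "\<gamma> > 0" using assms by simp
  define c where "c = hc (b + 1) \<beta> \<gamma>"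
  define r where "r = rr b"
  define A where "A v = (\<Sum>n. c n * r n * v^n)" for v
  define C where "C v = (\<Sum>n. c n * v^n)" for v
  have cpos: "c n > 0" for n unfolding c_def using hc_pos be ga assms(2) by auto
  have c0: "c 0 = 1" "r 0 = 1" by (simp_all add: c_def r_def rr_def)
  have hcb: "hc b \<beta> \<gamma> n = c n * r n" for n unfolding c_def r_def by (rule hc_b[OF b1])
  have Keq: "K = (\<lambda>v. A v / C v)"
    by (rule ext) (simp add: K_def hyp2F1_hc hcb A_def C_def c_def)
  define B where "B = 1 + \<bar>b\<bar> / (b + 1)"
  have rB: "\<bar>r n\<bar> \<le> B" for n
  proof (cases n)
    case 0 then show ?thesis using b1 by (simp add: r_def rr_def B_def)
  next
    case (Suc m)
    have "\<bar>b\<bar> / (b + Suc m) \<le> \<bar>b\<bar> / (b + 1)" using b1 by (intro divide_left_mono) auto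
    moreover have "\<bar>r n\<bar> = \<bar>b\<bar> / (b + Suc m)" using b1 unfolding Suc r_def rr_def
      by (simp add: abs_divide)
    moreover have "\<bar>b\<bar> / (b + 1) \<ge> 0" using b1 by simp
    ultimately show ?thesis unfolding B_def by linarith
  qed
  have sC: "summable (\<lambda>n. c n * v^n)" if "\<bar>v\<bar> < 1" for v
    unfolding c_def using hc_summable[of "b+1" \<beta> \<gamma> v] that be ga assms(2) by simp
  have sA: "summable (\<lambda>n. c n * r n * v^n)" if "\<bar>v\<bar> < 1" for v
  proof (rule summable_comparison_test')
    show "summable (\<lambda>n. B * (c n * \<bar>v\<bar>^n))" using sC[of "\<bar>v\<bar>"] that by (intro summable_mult) simp
    fix n
    have "norm (c n * r n * v^n) = \<bar>r n\<bar> * (c n * \<bar>v\<bar>^n)" using cpos[of n]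
      by (simp add: abs_mult power_abs)
    also have "\<dots> \<le> B * (c n * \<bar>v\<bar>^n)" using rB[of n] cpos[of n] by (intro mult_right_mono) auto
    finally show "norm (c n * r n * v^n) \<le> B * (c n * \<bar>v\<bar>^n)" .
  qed
  have C1: "C v \<ge> 1" if "0 \<le> v" "v < 1" for v
  proof -
    have "(\<Sum>n<1. c n * v^n) \<le> C v" unfolding C_def
      using sC[of v] that cpos by (intro sum_le_suminf) (auto simp: less_imp_le[OF cpos])
    then show ?thesis using c0 by simp
  qed
  have i: "K 0 = 1" unfolding Keq A_def C_def using c0 by simp
  have big: "eventually (\<lambda>v. C v \<ge> M) (at_left 1)" for M
    unfolding C_def
  proof (rule powser_unbounded)
    show "0 \<le> c n" for n using cpos[of n] by simp
    show "\<not> summable c" unfolding c_def using hc_diverge[of "b+1" \<beta> \<gamma>] assms by simp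
    show "summable (\<lambda>n. c n * v^n)" if "0 \<le> v" "v < 1" for v using sC that by simp
  qed
  have r0: "\<exists>N. \<forall>n\<ge>N. \<bar>r n\<bar> \<le> e" if e: "e > 0" for e
  proof (intro exI allI impI)
    fix n assume n: "nat \<lceil>\<bar>b\<bar> / e\<rceil> + 2 \<le> n"
    then have n1: "n \<ge> 1" "real n - 1 \<ge> \<bar>b\<bar> / e" by linarith+
    have pos: "b + n > 0" using b1 n1 by simp
    have "\<bar>b\<bar> / e \<le> b + n" using n1 b1 by linarith
    then have "\<bar>b\<bar> \<le> e * (b + n)" using e by (simp add: pos_divide_le_eq mult.commute)
    then have "\<bar>b\<bar> / (b + n) \<le> e" using pos by (simp add: pos_divide_le_eq mult.commute)
    then show "\<bar>r n\<bar> \<le> e" using n1 pos by (simp add: r_def rr_def)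
  qed
  have ii: "(K \<longlongrightarrow> 0) (at_left 1)"
    unfolding Keq A_def C_def
  proof (rule ratio_to_zero)
    show "0 \<le> c n" for n using cpos[of n] by simp
    show "\<bar>r n\<bar> \<le> B" for n by (rule rB)
    show "\<exists>N. \<forall>n\<ge>N. \<bar>r n\<bar> \<le> e" if "e > 0" for e using r0 that by blast
    show "summable (\<lambda>n. c n * v^n)" if "0 \<le> v" "v < 1" for v using sC that by simp
    show "eventually (\<lambda>v. (\<Sum>n. c n * v^n) \<ge> M) (at_left 1)" for M using big[of M] by (simp add: C_def)
  qed
  have Cpos: "C v > 0" if "0 \<le> v" "v < 1" for v using C1[OF that] by simp
  have qq1: "qq \<beta> \<gamma> 0 = 1" by (simp add: qq_def)
  have crx: "c n * r n * v^n = (pochhammer b n / fact n * v^n) * qq \<beta> \<gamma> n" for n v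
  proof -
    have "c n * r n = pochhammer b n / fact n * qq \<beta> \<gamma> n" using hcb[of n] hc_qq[of b \<beta> \<gamma> n] by simp
    then show ?thesis by simp
  qed
  have xnp: "pochhammer b n / fact n * v^n \<le> 0" if "-1 < b" "b < 0" "n \<ge> 1" "0 \<le> v" for n v
    using poch_nonpos[OF that(1-3)] that(4) by (intro mult_nonpos_nonneg divide_nonpos_pos) auto
  have iii: "(b \<ge> 0 \<or> (-1 < b \<and> b < 0 \<and> \<gamma> \<ge> \<beta>)) \<longrightarrow>
           (\<forall>u\<in>{0..<1}. \<forall>v\<in>{0..<1}. u \<le> v \<longrightarrow> K v \<le> K u)"
  proof (intro impI ballI)
    fix u v :: real assume H: "b \<ge> 0 \<or> (-1 < b \<and> b < 0 \<and> \<gamma> \<ge> \<beta>)" and u: "u \<in> {0..<1}"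
      and v: "v \<in> {0..<1}" and uv: "u \<le> v"
    have Cu: "C u > 0" and Cv: "C v > 0" using Cpos u v by auto
    show "K v \<le> K u"
    proof (cases "b \<ge> 0")
      case True
      have anti: "r n \<le> r m" if "m \<le> n" for m n
      proof (cases "m = 0")
        case True
        show ?thesis
        proof (cases "n = 0")
          case False
          have "b / (b + n) \<le> 1" using \<open>b \<ge> 0\<close> False by (simp add: divide_le_eq_1)
          then show ?thesis using True False by (simp add: r_def rr_def)
        qed (use True in simp)
      next
        case False
        then have "n \<noteq> 0" using that by auto
        have "b / (b + n) \<le> b / (b + m)" using \<open>b \<ge> 0\<close> that False
          by (intro divide_left_mono) auto
        then show ?thesis using False \<open>n \<noteq> 0\<close> by (simp add: r_def rr_def)
      qed
      have "A v * C u \<le> A u * C v"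
        unfolding A_def C_def
      proof (rule bk_infinite[where r=r and c=c])
        show "\<And>m n. m \<le> n \<Longrightarrow> r n \<le> r m" by (rule anti)
        show "\<And>n. 0 \<le> c n" by (rule less_imp_le[OF cpos])
        show "0 \<le> u" "u \<le> v" using u uv by auto
        show "summable (\<lambda>n. c n * r n * v^n)" "summable (\<lambda>n. c n * r n * u^n)" using sA u v by auto
        show "summable (\<lambda>n. c n * v^n)" "summable (\<lambda>n. c n * u^n)" using sC u v by auto
      qed
      then have "A v * C u / (C v * C u) \<le> A u * C v / (C v * C u)"
        using Cu Cv by (intro divide_right_mono) auto
      moreover have "A v * C u / (C v * C u) = A v / C v"
        using Cu by (rule nonzero_mult_divide_mult_cancel_right[OF less_imp_neq[symmetric]])
      moreover have "A u * C v / (C v * C u) = A u / C u"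
        using Cv by (subst mult.commute[of "C v" "C u"]) (rule nonzero_mult_divide_mult_cancel_right[OF less_imp_neq[symmetric]])
      ultimately show ?thesis unfolding Keq by simp
    next
      case False
      with H have H: "-1 < b" "b < 0" "\<gamma> \<ge> \<beta>" by auto
      have Au: "A u \<ge> 0"
      proof -
        have s1: "(\<lambda>n. pochhammer b n / fact n * u^n) sums ((1 - u) powr (-b))"
          using u by (intro binom_sums) auto
        have s2: "(\<lambda>n. c n * r n * u^n) sums A u" unfolding A_def
          using sA u by (intro summable_sums) auto
        have le: "pochhammer b n / fact n * u^n \<le> c n * r n * u^n" for n
          proof (cases "n = 0")
            case True then show ?thesis by (simp add: c0)
          next
            case False
            have x: "pochhammer b n / fact n * u^n \<le> 0" by (rule xnp) (use H False u in auto)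
            have "qq \<beta> \<gamma> n \<le> 1" by (rule qq_le1) (use be H in auto)
            then have "(pochhammer b n / fact n * u^n) * 1 \<le> (pochhammer b n / fact n * u^n) * qq \<beta> \<gamma> n"
              using x by (intro mult_left_mono_neg) auto
            then show ?thesis unfolding crx by simp
          qed
        have "(1 - u) powr (-b) \<le> A u" by (rule sums_le[OF le s1 s2])
        moreover have "(1 - u) powr (-b) \<ge> 0" by simp
        ultimately show ?thesis by linarith
      qed
      have Adec: "A v \<le> A u" unfolding A_def
      proof (rule suminf_le)
        show "summable (\<lambda>n. c n * r n * v^n)" "summable (\<lambda>n. c n * r n * u^n)" using sA u v by auto
        fix n
        show "c n * r n * v^n \<le> c n * r n * u^n"
        proof (cases "n = 0")
          case False
          have "c n * r n \<le> 0" using cpos[of n] H False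
          proof -
            have "b + n > 0" using H False by simp
            then have "r n < 0" unfolding r_def rr_def using False H by (simp add: divide_neg_pos)
            then show ?thesis using cpos[of n] by (simp add: mult_pos_neg less_imp_le)
          qed
          moreover have "u^n \<le> v^n" using u uv by (intro power_mono) auto
          ultimately show ?thesis by (intro mult_left_mono_neg) auto
        qed simp
      qed
      have Cinc: "C u \<le> C v" unfolding C_def
      proof (rule suminf_le)
        show "summable (\<lambda>n. c n * v^n)" "summable (\<lambda>n. c n * u^n)" using sC u v by auto
        fix n
        have "u^n \<le> v^n" using u uv by (intro power_mono) auto
        then show "c n * u^n \<le> c n * v^n" using cpos[of n] by (intro mult_left_mono) auto
      qed
      have "A v / C v \<le> A u / C v" using Adec Cv by (intro divide_right_mono) auto
      also have "\<dots> \<le> A u / C u" using Au Cinc Cu Cv by (intro divide_left_mono) auto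
      finally show ?thesis unfolding Keq .
    qed
  qed
  have iv: "(-1 < b \<and> b < 0 \<and> \<gamma> < \<beta>) \<longrightarrow>
           (\<exists>v0\<in>{0..<1}. K v0 < 0 \<and> (\<forall>v\<in>{0..<1}. K v0 \<le> K v))
           \<and> (\<forall>\<^sub>F v in at_left 1. K v < 0) \<and> (K \<longlongrightarrow> 0) (at_left 1)
           \<and> (INF v\<in>{0..<1}. K v) \<ge> b / (b + 1)"
  proof (intro impI)
    assume "-1 < b \<and> b < 0 \<and> \<gamma> < \<beta>"
    then have H: "-1 < b" "b < 0" "\<gamma> < \<beta>" by auto
    have lowK: "K v \<ge> b / (b + 1)" if v: "0 \<le> v" "v < 1" for v
    proof -
      have rl: "b / (b + 1) \<le> r n" for n
      proof (cases "n = 0")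
        case True
        have "b / (b + 1) \<le> 0" using H by (simp add: divide_nonpos_pos)
        then show ?thesis using True by (simp add: r_def rr_def)
      next
        case False
        have "b / (b + 1) \<le> b / (b + n)" using H False
          by (intro divide_left_mono_neg) auto
        then show ?thesis using False by (simp add: r_def rr_def)
      qed
      have "(\<Sum>n. b / (b + 1) * (c n * v^n)) \<le> A v" unfolding A_def
      proof (rule suminf_le)
        show "summable (\<lambda>n. b / (b + 1) * (c n * v^n))" using sC v by (intro summable_mult) auto
        show "summable (\<lambda>n. c n * r n * v^n)" using sA v by auto
        fix n
        have "b / (b + 1) * (c n * v^n) \<le> r n * (c n * v^n)"
          using rl[of n] cpos[of n] v by (intro mult_right_mono) auto
        then show "b / (b + 1) * (c n * v^n) \<le> c n * r n * v^n" by (simp add: mult_ac)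
      qed
      also have "(\<Sum>n. b / (b + 1) * (c n * v^n)) = b / (b + 1) * C v"
        unfolding C_def using sC v by (intro suminf_mult) auto
      finally have "b / (b + 1) * C v \<le> A v" .
      then show ?thesis unfolding Keq using Cpos[OF v] by (simp add: pos_le_divide_eq)
    qed
    have infK: "(INF v\<in>{0..<1}. K v) \<ge> b / (b + 1)"
      by (rule cINF_greatest) (use lowK in auto)
    define q1 where "q1 = \<beta> / \<gamma>"
    have q1: "q1 > 1" unfolding q1_def using H ga by simp
    have Aup: "A v \<le> q1 * (1 - v) powr (-b) + (1 - q1)" if v: "0 \<le> v" "v < 1" for v
    proof -
      have s1: "(\<lambda>n. q1 * (pochhammer b n / fact n * v^n) + (if n \<in> {0} then 1 - q1 else 0))
                 sums (q1 * (1 - v) powr (-b) + (\<Sum>n\<in>{0}. 1 - q1))"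
      proof (rule sums_add)
        show "(\<lambda>n. q1 * (pochhammer b n / fact n * v^n)) sums (q1 * (1 - v) powr (-b))"
          using v by (intro sums_mult binom_sums) auto
        show "(\<lambda>n. if n \<in> {0} then 1 - q1 else 0) sums (\<Sum>n\<in>{0}. 1 - q1)"
          using sums_If_finite_set[of "{0::nat}" "\<lambda>n. 1 - q1"] by simp
      qed
      have s2: "(\<lambda>n. c n * r n * v^n) sums A v" unfolding A_def
        using sA v by (intro summable_sums) auto
      have le: "c n * r n * v^n \<le> q1 * (pochhammer b n / fact n * v^n) + (if n \<in> {0} then 1 - q1 else 0)" for n
      proof (cases "n = 0")
        case True then show ?thesis by (simp add: c0)
      next
        case False
        have x: "pochhammer b n / fact n * v^n \<le> 0" by (rule xnp) (use H False v in auto)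
        have "qq \<beta> \<gamma> n \<ge> q1" unfolding q1_def by (rule qq_ge) (use H ga False in auto)
        then have "(pochhammer b n / fact n * v^n) * qq \<beta> \<gamma> n \<le> (pochhammer b n / fact n * v^n) * q1"
          using x by (intro mult_left_mono_neg) auto
        then show ?thesis unfolding crx using False by (simp add: mult.commute)
      qed
      have "A v \<le> q1 * (1 - v) powr (-b) + (\<Sum>n\<in>{0}. 1 - q1)" by (rule sums_le[OF le s2 s1])
      then show ?thesis by simp
    qed
    have "((\<lambda>v. q1 * (1 - v) powr (-b) + (1 - q1)) \<longlongrightarrow> q1 * 0 + (1 - q1)) (at_left (1::real))"
    proof (intro tendsto_intros tendsto_zero_powrI)
      show "((\<lambda>v. 1 - v) \<longlongrightarrow> (0::real)) (at_left 1)"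
        using tendsto_diff[OF tendsto_const[of "1::real"] tendsto_ident_at[of 1 "{..<1}"]] by simp
      show "\<forall>\<^sub>F x in at_left 1. 0 \<le> 1 - (x::real)"
        using eventually_at_left_real[of 0 "1::real"] by (auto elim!: eventually_mono)
    qed (use H in auto)
    then have "eventually (\<lambda>v. q1 * (1 - v) powr (-b) + (1 - q1) < 0) (at_left (1::real))"
      using q1 by (intro order_tendstoD) auto
    moreover have "eventually (\<lambda>v. v \<in> {0<..<1}) (at_left (1::real))"
      by (rule eventually_at_left_real) simp
    ultimately have evneg: "eventually (\<lambda>v. K v < 0) (at_left 1)"
    proof eventually_elim
      case (elim v)
      then have "A v < 0" using Aup[of v] by auto
      then show ?case unfolding Keq using Cpos[of v] elim by (simp add: divide_neg_pos)
    qed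
    have "eventually (\<lambda>v. K v < 0 \<and> v \<in> {0<..<1}) (at_left (1::real))"
      using evneg \<open>eventually (\<lambda>v. v \<in> {0<..<1}) (at_left (1::real))\<close> by eventually_elim auto
    then obtain w where w: "K w < 0" "0 < w" "w < 1"
      using eventually_happens'[of "at_left (1::real)"] by auto
    have "eventually (\<lambda>v. K w < K v) (at_left (1::real))"
      using ii w by (intro order_tendstoD) auto
    then obtain t where t: "t < 1" "\<And>y. y > t \<Longrightarrow> y < 1 \<Longrightarrow> K w < K y"
      unfolding eventually_at_left_field by auto
    define t' where "t' = max t w"
    have t': "0 \<le> t'" "t' < 1" "w \<le> t'" "t \<le> t'" using t w by (auto simp: t'_def)
    have contK: "continuous_on {0..t'} K"
    proof (intro continuous_at_imp_continuous_on ballI)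
      fix x assume x: "x \<in> {0..t'}"
      then have x0: "0 \<le> x" "x < 1" using t' by auto
      define R where "R = (1 + x) / 2"
      have R: "\<bar>R\<bar> < 1" "norm x < norm R" using x0 by (auto simp: R_def)
      have "isCont (\<lambda>y. \<Sum>n. (c n * r n) * y^n) x"
        by (rule isCont_powser[of _ R]) (use sA[OF R(1)] R(2) in auto)
      moreover have "isCont (\<lambda>y. \<Sum>n. c n * y^n) x"
        by (rule isCont_powser[of _ R]) (use sC[OF R(1)] R(2) in auto)
      ultimately have "isCont (\<lambda>y. A y / C y) x"
        unfolding A_def C_def using Cpos[OF x0] by (intro isCont_divide) (auto simp: C_def)
      then show "isCont K x" unfolding Keq .
    qed
    obtain x0 where x0: "x0 \<in> {0..t'}" "\<And>y. y \<in> {0..t'} \<Longrightarrow> K x0 \<le> K y"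
      using continuous_attains_inf[OF compact_Icc _ contK] t' by auto
    have "K x0 \<le> K w" using x0 w t' by auto
    then have mn: "\<exists>v0\<in>{0..<1}. K v0 < 0 \<and> (\<forall>v\<in>{0..<1}. K v0 \<le> K v)"
    proof (intro bexI[of _ x0] conjI ballI)
      show "K x0 < 0" using \<open>K x0 \<le> K w\<close> w by simp
      show "x0 \<in> {0..<1}" using x0 t' by auto
      fix v :: real assume v: "v \<in> {0..<1}"
      show "K x0 \<le> K v"
      proof (cases "v \<le> t'")
        case True then show ?thesis using x0 v by auto
      next
        case False
        then have "K w < K v" using t t' v by auto
        then show ?thesis using \<open>K x0 \<le> K w\<close> by simp
      qed
    qed
    show "(\<exists>v0\<in>{0..<1}. K v0 < 0 \<and> (\<forall>v\<in>{0..<1}. K v0 \<le> K v))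
           \<and> (\<forall>\<^sub>F v in at_left 1. K v < 0) \<and> (K \<longlongrightarrow> 0) (at_left 1)
           \<and> (INF v\<in>{0..<1}. K v) \<ge> b / (b + 1)"
      using mn evneg ii infK by blast
  qed
  show ?thesis using i ii iii iv by blast
qed

end
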